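(* Let $\mathcal{G}=(\mathcal{P},\mathcal{L})$ be a Fischer space of symplectic type, let $R$ be a commutative ring with $2=0$, and let $A=M_R(\mathcal{G},1)$ be the nilpotent Matsuo algebra. For each line $\ell\in\mathcal{L}$, let $A^\ell_0$ and $A^\ell_1$ be the eigenspaces of $\operatorname{ad}_\ell$ for the eigenvalues $0$ and $1$. Then for each line $\ell$ we have $A=A^\ell_0\oplus A^\ell_1$, and \[ A^\ell_0A^\ell_0\subseteq A^\ell_0,\quad A^\ell_0A^\ell_1\subseteq A^\ell_1,\quad A^\ell_1A^\ell_1\subseteq A^\ell_0; \] that is, $A$ is a decomposition algebra with the $\mathbb{Z}/2\mathbb{Z}$ fusion law $0*0=\{0\}$, $0*1=1*0=\{1\}$, $1*1=\{0\}$, with one decomposition for each line.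
   Context: A 3-transposition group is a pair $(G,D)$ where $D$ is a conjugacy class of involutions generating $G$ such that $de$ has order at most $3$ for all $d,e\in D$. Its Fischer space $\mathcal{G}=(\mathcal{P},\mathcal{L})$ has point set $\mathcal{P}=D$ and as lines the $3$-subsets consisting of the three involutions of a subgroup isomorphic to $\mathrm{Sym}(3)$. Distinct points $p,q$ are collinear ($p\sim q$) if they lie on a common line (equivalently $pq$ has order $3$), and then $p\wedge q$ is the third point of that line. A subspace is a nonempty subset closed under $\wedge$. The subspace generated by two distinct intersecting lines is always either a complete quadrilateral (6 points, 4 lines, any two lines meet in one point, each point on two lines) or an affine plane of order $3$; $\mathcal{G}$ is of symplectic type if it is always a complete quadrilateral. For a commutative ring $R$ with $2=0$, the nilpotent Matsuo algebra $A=M_R(\mathcal{G},1)$ is the free $R$-module with basis $\mathcal{P}$ and commutative bilinear product $p\cdot q=0$ if $p=q$ or $p\not\sim q$, and $p\cdot q=p+q+p\wedge q$ if $p\sim q$. For a line $\ell$, we also write $\ell$ for the element of $A$ that is the sum of its three points, and $\operatorname{ad}_\ell\colon A\to A$, $v\mapsto \ell v$. The eigenspace for eigenvalue $\lambda$ is $\{v\in A:\ell v=\lambda v\}$. *)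

theory Defs
  imports "HOL-Algebra.Algebra"
begin

definition three_transposition_group :: "'g monoid \<Rightarrow> 'g set \<Rightarrow> bool" where
  "three_transposition_group G D \<longleftrightarrow>
     group G \<and>
     (\<exists>d\<in>carrier G. d \<noteq> \<one>\<^bsub>G\<^esub> \<and> d \<otimes>\<^bsub>G\<^esub> d = \<one>\<^bsub>G\<^esub> \<and>
        D = {g \<otimes>\<^bsub>G\<^esub> d \<otimes>\<^bsub>G\<^esub> inv\<^bsub>G\<^esub> g | g. g \<in> carrier G}) \<and>
     generate G D = carrier G \<and>
     (\<forall>d\<in>D. \<forall>e\<in>D. \<exists>n\<in>{1,2,3::nat}. (d \<otimes>\<^bsub>G\<^esub> e) [^]\<^bsub>G\<^esub> n = \<one>\<^bsub>G\<^esub>)"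

definition fischer_lines :: "'g monoid \<Rightarrow> 'g set \<Rightarrow> 'g set set" where
  "fischer_lines G D = {l. l \<subseteq> D \<and> card l = 3 \<and>
     (\<exists>H. subgroup H G \<and> (G\<lparr>carrier := H\<rparr>) \<cong> sym_group 3 \<and>
          l = {x \<in> H. x \<noteq> \<one>\<^bsub>G\<^esub> \<and> x \<otimes>\<^bsub>G\<^esub> x = \<one>\<^bsub>G\<^esub>})}"

definition collinear :: "'a set set \<Rightarrow> 'a \<Rightarrow> 'a \<Rightarrow> bool" where
  "collinear L p q \<longleftrightarrow> p \<noteq> q \<and> (\<exists>l\<in>L. p \<in> l \<and> q \<in> l)"

definition wedge :: "'a set set \<Rightarrow> 'a \<Rightarrow> 'a \<Rightarrow> 'a" where
  "wedge L p q = (THE r. r \<noteq> p \<and> r \<noteq> q \<and> (\<exists>l\<in>L. l = {p, q, r}))"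

definition is_subspace :: "'a set \<Rightarrow> 'a set set \<Rightarrow> 'a set \<Rightarrow> bool" where
  "is_subspace P L Y \<longleftrightarrow> Y \<noteq> {} \<and> Y \<subseteq> P \<and>
     (\<forall>p\<in>Y. \<forall>q\<in>Y. collinear L p q \<longrightarrow> wedge L p q \<in> Y)"

definition generated_subspace :: "'a set \<Rightarrow> 'a set set \<Rightarrow> 'a set \<Rightarrow> 'a set" where
  "generated_subspace P L S = \<Inter>{Y. is_subspace P L Y \<and> S \<subseteq> Y}"

definition complete_quadrilateral :: "'a set set \<Rightarrow> 'a set \<Rightarrow> bool" where
  "complete_quadrilateral L Y \<longleftrightarrow>
     (let LX = {l\<in>L. l \<subseteq> Y} in
       card Y = 6 \<and> card LX = 4 \<and>
       (\<forall>l1\<in>LX. \<forall>l2\<in>LX. l1 \<noteq> l2 \<longrightarrow> card (l1 \<inter> l2) = 1) \<and>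
       (\<forall>p\<in>Y. card {l\<in>LX. p \<in> l} = 2))"

definition symplectic_type :: "'a set \<Rightarrow> 'a set set \<Rightarrow> bool" where
  "symplectic_type P L \<longleftrightarrow>
     (\<forall>l1\<in>L. \<forall>l2\<in>L. l1 \<noteq> l2 \<and> l1 \<inter> l2 \<noteq> {} \<longrightarrow>
        complete_quadrilateral L (generated_subspace P L (l1 \<union> l2)))"

definition matsuo_carrier :: "'a set \<Rightarrow> ('a \<Rightarrow> 'r::comm_ring_1) set" where
  "matsuo_carrier P = {v. finite {x. v x \<noteq> 0} \<and> {x. v x \<noteq> 0} \<subseteq> P}"

definition basis_vec :: "'a \<Rightarrow> 'a \<Rightarrow> 'r::comm_ring_1" where
  "basis_vec p = (\<lambda>x. if x = p then 1 else 0)"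

definition basis_prod :: "'a set set \<Rightarrow> 'a \<Rightarrow> 'a \<Rightarrow> 'a \<Rightarrow> 'r::comm_ring_1" where
  "basis_prod L p q = (if collinear L p q
     then (\<lambda>x. basis_vec p x + basis_vec q x + basis_vec (wedge L p q) x)
     else (\<lambda>x. 0))"

definition matsuo_mult :: "'a set set \<Rightarrow> ('a \<Rightarrow> 'r::comm_ring_1) \<Rightarrow> ('a \<Rightarrow> 'r) \<Rightarrow> ('a \<Rightarrow> 'r)" where
  "matsuo_mult L u v = (\<lambda>x. \<Sum>p\<in>{y. u y \<noteq> 0}. \<Sum>q\<in>{y. v y \<noteq> 0}. u p * v q * basis_prod L p q x)"

definition line_elem :: "'a set \<Rightarrow> 'a \<Rightarrow> 'r::comm_ring_1" where
  "line_elem l = (\<lambda>x. if x \<in> l then 1 else 0)"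

definition eigenspace_ad :: "'a set \<Rightarrow> 'a set set \<Rightarrow> 'a set \<Rightarrow> 'r \<Rightarrow> ('a \<Rightarrow> 'r::comm_ring_1) set" where
  "eigenspace_ad P L l c = {v \<in> matsuo_carrier P. matsuo_mult L (line_elem l) v = (\<lambda>x. c * v x)}"

end

theory Submission
  imports Defs
begin


locale fgeo =
  fixes P :: "'a set" and L :: "'a set set"
  assumes lsub: "l \<in> L \<Longrightarrow> l \<subseteq> P"
    and lcard: "l \<in> L \<Longrightarrow> card l = 3"
    and symp: "symplectic_type P L"
begin

abbreviation col where "col \<equiv> collinear L"
abbreviation w where "w \<equiv> wedge L"

lemma col_sym: "col p q = col q p" unfolding collinear_def by auto
lemma col_irr[simp]: "\<not> col p p" unfolding collinear_def by auto
lemma w_sym: "w p q = w q p" unfolding wedge_def by (intro arg_cong[where f=The] ext) (auto simp: insert_commute)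

definition Y where "Y l1 l2 = generated_subspace P L (l1 \<union> l2)"

lemma Y_sup: "l1 \<union> l2 \<subseteq> Y l1 l2" unfolding Y_def generated_subspace_def by auto

lemma Y_closed: "x \<in> Y l1 l2 \<Longrightarrow> y \<in> Y l1 l2 \<Longrightarrow> col x y \<Longrightarrow> w x y \<in> Y l1 l2"
  unfolding Y_def generated_subspace_def is_subspace_def by auto

lemma cq_facts:
  assumes "l1 \<in> L" "l2 \<in> L" "l1 \<noteq> l2" "x \<in> l1" "x \<in> l2"
  shows "card (Y l1 l2) = 6"
    and "\<And>m1 m2. m1 \<in> L \<Longrightarrow> m1 \<subseteq> Y l1 l2 \<Longrightarrow> m2 \<in> L \<Longrightarrow> m2 \<subseteq> Y l1 l2 \<Longrightarrow> m1 \<noteq> m2 \<Longrightarrow> card (m1 \<inter> m2) = 1"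
    and "\<And>y. y \<in> Y l1 l2 \<Longrightarrow> card {l \<in> {l \<in> L. l \<subseteq> Y l1 l2}. y \<in> l} = 2"
proof -
  have "complete_quadrilateral L (Y l1 l2)"
    using symp assms unfolding symplectic_type_def Y_def by blast
  then show "card (Y l1 l2) = 6"
    and "\<And>m1 m2. m1 \<in> L \<Longrightarrow> m1 \<subseteq> Y l1 l2 \<Longrightarrow> m2 \<in> L \<Longrightarrow> m2 \<subseteq> Y l1 l2 \<Longrightarrow> m1 \<noteq> m2 \<Longrightarrow> card (m1 \<inter> m2) = 1"
    and "\<And>y. y \<in> Y l1 l2 \<Longrightarrow> card {l \<in> {l \<in> L. l \<subseteq> Y l1 l2}. y \<in> l} = 2"
    unfolding complete_quadrilateral_def Let_def by blast+
qed

lemma inter1: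
  assumes "l1 \<in> L" "l2 \<in> L" "l1 \<noteq> l2" "p \<in> l1" "p \<in> l2" "q \<in> l1" "q \<in> l2"
  shows "p = q"
proof -
  have "card (l1 \<inter> l2) = 1" using cq_facts(2)[OF assms(1-5) assms(1) _ assms(2) _ assms(3)] Y_sup by blast
  then obtain z where z: "l1 \<inter> l2 = {z}" by (auto simp: card_1_singleton_iff)
  have "p \<in> l1 \<inter> l2" "q \<in> l1 \<inter> l2" using assms(4-7) by auto
  then show ?thesis unfolding z by auto
qed

lemma three_lines:
  assumes "l1 \<in> L" "l2 \<in> L" "l1 \<noteq> l2" "x \<in> l1" "x \<in> l2"
    and "y \<in> Y l1 l2" "m1 \<in> L" "m2 \<in> L" "m3 \<in> L" "m1 \<subseteq> Y l1 l2" "m2 \<subseteq> Y l1 l2" "m3 \<subseteq> Y l1 l2"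
    "y \<in> m1" "y \<in> m2" "y \<in> m3" "m1 \<noteq> m2" "m1 \<noteq> m3" "m2 \<noteq> m3"
  shows False
proof -
  have c: "card {l \<in> {l \<in> L. l \<subseteq> Y l1 l2}. y \<in> l} = 2" using cq_facts(3)[OF assms(1-6)] .
  have f: "finite {l \<in> {l \<in> L. l \<subseteq> Y l1 l2}. y \<in> l}"
  proof (rule ccontr)
    assume "infinite {l \<in> {l \<in> L. l \<subseteq> Y l1 l2}. y \<in> l}"
    then have "card {l \<in> {l \<in> L. l \<subseteq> Y l1 l2}. y \<in> l} = 0" by (rule card.infinite)
    with c show False by simp
  qed
  have "{m1,m2,m3} \<subseteq> {l \<in> {l \<in> L. l \<subseteq> Y l1 l2}. y \<in> l}" using assms by auto
  have "card {m1,m2,m3} = 3" using assms(16-18) by simp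
  with card_mono[OF f \<open>{m1,m2,m3} \<subseteq> _\<close>] c show False by simp
qed

lemma other_line:
  assumes "l1 \<in> L" "l2 \<in> L" "l1 \<noteq> l2" "x \<in> l1" "x \<in> l2"
    and "y \<in> Y l1 l2" "m \<in> L" "m \<subseteq> Y l1 l2" "y \<in> m"
  shows "\<exists>m'\<in>L. m' \<subseteq> Y l1 l2 \<and> y \<in> m' \<and> m' \<noteq> m"
proof (rule ccontr)
  assume "\<not> ?thesis"
  then have "{l \<in> {l \<in> L. l \<subseteq> Y l1 l2}. y \<in> l} \<subseteq> {m}" by auto
  then have "card {l \<in> {l \<in> L. l \<subseteq> Y l1 l2}. y \<in> l} \<le> 1"
  proof -
    have "card {l \<in> {l \<in> L. l \<subseteq> Y l1 l2}. y \<in> l} \<le> card {m}"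
      by (rule card_mono) (use \<open>{l \<in> {l \<in> L. l \<subseteq> Y l1 l2}. y \<in> l} \<subseteq> {m}\<close> in auto)
    then show ?thesis by simp
  qed
  with cq_facts(3)[OF assms(1-6)] show False by simp
qed

lemma L_dist: "{x,y,z} \<in> L \<Longrightarrow> x \<noteq> y \<and> y \<noteq> z \<and> x \<noteq> z"
  using lcard[of "{x,y,z}"] by (auto simp: card_insert_if split: if_splits)

lemma line_third:
  assumes "l \<in> L" "p \<in> l" "q \<in> l" "p \<noteq> q"
  shows "\<exists>r. l = {p,q,r} \<and> r \<noteq> p \<and> r \<noteq> q"
proof -
  have "card (l - {p,q}) = 1" using card_Diff_subset[of "{p,q}" l] assms lcard[OF assms(1)] by simp
  then obtain r where r: "l - {p,q} = {r}" by (auto simp: card_1_singleton_iff)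
  then have "l = {p,q,r}" using assms(2,3) by blast
  moreover have "r \<noteq> p" "r \<noteq> q" using r by blast+
  ultimately show ?thesis by blast
qed

lemma wedge_line:
  assumes "{p,q,r} \<in> L"
  shows "w p q = r"
  unfolding wedge_def
proof (rule the_equality)
  show "r \<noteq> p \<and> r \<noteq> q \<and> (\<exists>l\<in>L. l = {p, q, r})" using assms L_dist[OF assms] by auto
next
  fix r' assume h: "r' \<noteq> p \<and> r' \<noteq> q \<and> (\<exists>l\<in>L. l = {p, q, r'})"
  then have "{p,q,r'} \<in> L" by auto
  have "{p,q,r'} = {p,q,r}"
  proof (rule ccontr)
    assume "{p,q,r'} \<noteq> {p,q,r}"
    from inter1[OF \<open>{p,q,r'} \<in> L\<close> assms this, of p q] L_dist[OF assms] show False by auto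
  qed
  then show "r' = r" using h L_dist[OF assms] by auto
qed

lemma ln_all:
  assumes "{x,y,z} \<in> L"
  shows "col x y" "col y x" "col x z" "col z x" "col y z" "col z y"
    "w x y = z" "w y x = z" "w x z = y" "w z x = y" "w y z = x" "w z y = x"
    "x \<noteq> y" "y \<noteq> z" "x \<noteq> z" "y \<noteq> x" "z \<noteq> y" "z \<noteq> x"
proof -
  have d: "x \<noteq> y" "y \<noteq> z" "x \<noteq> z" using L_dist[OF assms] by auto
  have e: "{y,x,z} = {x,y,z}" "{x,z,y} = {x,y,z}" "{z,x,y} = {x,y,z}" "{y,z,x} = {x,y,z}" "{z,y,x} = {x,y,z}"
    by blast+
  have p: "{y,x,z} \<in> L" "{x,z,y} \<in> L" "{z,x,y} \<in> L" "{y,z,x} \<in> L" "{z,y,x} \<in> L"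
    using assms unfolding e by simp_all
  have c: "col u v" if "u \<in> {x,y,z}" "v \<in> {x,y,z}" "u \<noteq> v" for u v
    unfolding collinear_def
  proof (rule conjI)
    show "u \<noteq> v" by fact
    show "\<exists>l\<in>L. u \<in> l \<and> v \<in> l"
      by (rule bexI[where x="{x,y,z}"]) (use that assms in simp_all)
  qed
  show "col x y" "col y x" "col x z" "col z x" "col y z" "col z y"
    using c d by simp_all
  show "w x y = z" "w y x = z" "w x z = y" "w z x = y" "w y z = x" "w z y = x"
    by (rule wedge_line[OF assms]) (rule wedge_line, fact)+
  show "x \<noteq> y" "y \<noteq> z" "x \<noteq> z" "y \<noteq> x" "z \<noteq> y" "z \<noteq> x" using d by auto
qed

lemma col_line: assumes "col p q" shows "{p,q,w p q} \<in> L"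
proof -
  from assms obtain l where "l \<in> L" "p \<in> l" "q \<in> l" "p \<noteq> q" unfolding collinear_def by auto
  then obtain r where "l = {p,q,r}" using line_third by blast
  with \<open>l \<in> L\<close> show ?thesis using wedge_line by auto
qed

lemma gq:
  assumes h1: "{p,a,a'} \<in> L" and h2: "{p,b,b'} \<in> L" and ne: "{p,a,a'} \<noteq> {p,b,b'}"
  shows "\<exists>s. ({a,b,s} \<in> L \<and> {a',b',s} \<in> L) \<or> ({a,b',s} \<in> L \<and> {a',b,s} \<in> L)"
proof -
  define l1 where "l1 = {p,a,a'}"
  define l2 where "l2 = {p,b,b'}"
  have L1: "l1 \<in> L" "l2 \<in> L" "l1 \<noteq> l2" "p \<in> l1" "p \<in> l2" using assms by (auto simp: l1_def l2_def)
  note d1 = L_dist[OF h1] and d2 = L_dist[OF h2]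
  have Ysub: "l1 \<subseteq> Y l1 l2" "l2 \<subseteq> Y l1 l2" using Y_sup by auto
  have aY: "a \<in> Y l1 l2" "a' \<in> Y l1 l2" using Ysub l1_def by auto
  have a_n2: "a \<notin> l2" "a' \<notin> l2"
    using inter1[OF L1(1-3), of a p] inter1[OF L1(1-3), of a' p] d1 L1 by (auto simp: l1_def)
  obtain l3 where l3: "l3 \<in> L" "l3 \<subseteq> Y l1 l2" "a \<in> l3" "l3 \<noteq> l1"
    using other_line[OF L1 aY(1) L1(1) Ysub(1)] l1_def by auto
  have l3n2: "l3 \<noteq> l2" using l3 a_n2 by auto
  have pn3: "p \<notin> l3" using three_lines[OF L1, of p l1 l2 l3] Ysub L1 l3 l3n2 by auto
  have "card (l3 \<inter> l2) = 1" using cq_facts(2)[OF L1, of l3 l2] l3 L1 Ysub l3n2 by auto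
  then obtain b0 where b0: "b0 \<in> l3" "b0 \<in> l2" by (auto simp: card_1_singleton_iff)
  have b0bb: "b0 = b \<or> b0 = b'" using b0 pn3 l2_def by auto
  have ab0: "a \<noteq> b0" using a_n2 b0 by auto
  obtain s where s: "l3 = {a,b0,s}" "s \<noteq> a" "s \<noteq> b0" using line_third[OF l3(1) l3(3) b0(1) ab0] by auto
  have sn1: "s \<notin> l1" using inter1[OF l3(1) L1(1) l3(4), of a s] s l3(3) l1_def by auto
  have sn2: "s \<notin> l2" using inter1[OF l3(1) L1(2) l3n2, of b0 s] s b0 by auto
  obtain l4 where l4: "l4 \<in> L" "l4 \<subseteq> Y l1 l2" "a' \<in> l4" "l4 \<noteq> l1"
    using other_line[OF L1 aY(2) L1(1) Ysub(1)] l1_def by auto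
  have l4n2: "l4 \<noteq> l2" using l4 a_n2 by auto
  have pn4: "p \<notin> l4" using three_lines[OF L1, of p l1 l2 l4] Ysub L1 l4 l4n2 by auto
  have "card (l4 \<inter> l2) = 1" using cq_facts(2)[OF L1, of l4 l2] l4 L1 Ysub l4n2 by auto
  then obtain b1 where b1: "b1 \<in> l4" "b1 \<in> l2" by (auto simp: card_1_singleton_iff)
  have b1bb: "b1 = b \<or> b1 = b'" using b1 pn4 l2_def by auto
  have ab1: "a' \<noteq> b1" using a_n2 b1 by auto
  obtain s' where s': "l4 = {a',b1,s'}" "s' \<noteq> a'" "s' \<noteq> b1" using line_third[OF l4(1) l4(3) b1(1) ab1] by auto
  have sn1': "s' \<notin> l1" using inter1[OF l4(1) L1(1) l4(4), of a' s'] s' l4(3) l1_def by auto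
  have sn2': "s' \<notin> l2" using inter1[OF l4(1) L1(2) l4n2, of b1 s'] s' b1 by auto
  have l34: "l3 \<noteq> l4"
  proof
    assume "l3 = l4"
    then have "a \<in> l4" using l3 by auto
    then show False using inter1[OF l4(1) L1(1) l4(4), of a a'] l4 d1 l1_def by auto
  qed
  have b01: "b0 \<noteq> b1"
  proof
    assume "b0 = b1"
    then show False using three_lines[OF L1, of b0 l2 l3 l4] Ysub L1 l3 l4 b0 b1 l3n2 l4n2 l34 by auto
  qed
  have "card (l3 \<inter> l4) = 1" using cq_facts(2)[OF L1, of l3 l4] l3 l4 l34 by auto
  then obtain x where x: "x \<in> l3" "x \<in> l4" by (auto simp: card_1_singleton_iff)
  have an4: "a \<notin> l4" using inter1[OF l4(1) L1(1) l4(4), of a a'] l4 d1 l1_def by auto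
  have an3: "a' \<notin> l3" using inter1[OF l3(1) L1(1) l3(4), of a a'] l3 d1 l1_def by auto
  have b0n4: "b0 \<notin> l4" using inter1[OF l4(1) L1(2) l4n2, of b0 b1] b0 b1 b01 by auto
  have b1n3: "b1 \<notin> l3" using inter1[OF l3(1) L1(2) l3n2, of b0 b1] b0 b1 b01 by auto
  have "x = s" using x(1) x(2) an4 b0n4 unfolding s(1) by auto
  moreover have "x = s'" using x(2) x(1) an3 b1n3 unfolding s'(1) by auto
  ultimately have ss: "s = s'" by simp
  show ?thesis
  proof (cases "b0 = b")
    case True
    then have "b1 = b'" using b1bb b01 by auto
    then have "{a,b,s} \<in> L" "{a',b',s} \<in> L" using True l3(1) l4(1) s(1) s'(1) ss by auto
    then show ?thesis by blast
  next
    case False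
    then have "b0 = b'" "b1 = b" using b1bb b0bb b01 by auto
    then have "{a,b',s} \<in> L" "{a',b,s} \<in> L" using l3(1) l4(1) s(1) s'(1) ss by auto
    then show ?thesis by blast
  qed
qed

lemma Z1:
  assumes l: "{a,b,c} \<in> L" and p: "p \<notin> {a,b,c}" and ap: "col p a"
  shows "col p b \<or> col p c"
proof -
  have "{a,p,w p a} = {p,a,w p a}" by blast
  then have m: "{a,p,w p a} \<in> L" using col_line[OF ap] by simp
  have "{a,b,c} \<noteq> {a,p,w p a}" using p by auto
  from gq[OF l m this] obtain s where
    "({b,p,s} \<in> L \<and> {c,w p a,s} \<in> L) \<or> ({b,w p a,s} \<in> L \<and> {c,p,s} \<in> L)" by blast
  then show ?thesis using ln_all(2)[of b p s] ln_all(2)[of c p s] by blast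
qed

lemma Z2:
  assumes l: "{a,b,c} \<in> L" and p: "p \<notin> {a,b,c}" and ap: "col p a" and bp: "col p b" and cp: "col p c"
  shows False
proof -
  define m where "m = {a,p,w p a}"
  have "m = {p,a,w p a}" unfolding m_def by blast
  then have m: "m \<in> L" using col_line[OF ap] by simp
  have lm: "{a,b,c} \<noteq> m" using p m_def by auto
  have L1: "{a,b,c} \<in> L" "m \<in> L" "{a,b,c} \<noteq> m" "a \<in> {a,b,c}" "a \<in> m" using l m lm m_def by auto
  have Ysub: "{a,b,c} \<subseteq> Y {a,b,c} m" "m \<subseteq> Y {a,b,c} m" using Y_sup by auto
  have pY: "p \<in> Y {a,b,c} m" using Ysub m_def by auto
  define lb where "lb = {p,b,w p b}"
  define lc where "lc = {p,c,w p c}"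
  have lbL: "lb \<in> L" "lc \<in> L" using col_line bp cp lb_def lc_def by auto
  have lbY: "lb \<subseteq> Y {a,b,c} m" "lc \<subseteq> Y {a,b,c} m"
    using Y_closed[of p "{a,b,c}" m b] Y_closed[of p "{a,b,c}" m c] pY Ysub bp cp lb_def lc_def by auto
  note dl = L_dist[OF l]
  have bm: "b \<notin> m" using inter1[OF L1(1-3), of a b] L1(5) dl by auto
  have cm: "c \<notin> m" using inter1[OF L1(1-3), of a c] L1(5) dl by auto
  have "lb \<noteq> lc"
  proof
    assume "lb = lc"
    then have "c \<in> lb" using lc_def by auto
    moreover have "lb \<noteq> {a,b,c}" using p lb_def by auto
    ultimately show False using inter1[OF lbL(1) l, of b c] dl lb_def by auto
  qed
  then show False
    using three_lines[OF L1 pY m lbL(1) lbL(2) Ysub(2) lbY] bm cm lb_def lc_def m_def by auto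
qed

end


lemma K_sym: "basis_prod L p q = basis_prod L q p"
proof -
  have c: "collinear L p q = collinear L q p" unfolding collinear_def by auto
  have w: "wedge L p q = wedge L q p" unfolding wedge_def by (intro arg_cong[where f=The] ext) (auto simp: insert_commute)
  show ?thesis unfolding basis_prod_def c w by (simp add: add_ac)
qed

lemma mm_repr:
  assumes "finite S" "finite T" "{x. u x \<noteq> 0} \<subseteq> S" "{x. v x \<noteq> 0} \<subseteq> T"
  shows "matsuo_mult L u v y = (\<Sum>p\<in>S. \<Sum>q\<in>T. u p * v q * basis_prod L p q y)"
proof -
  have "matsuo_mult L u v y = (\<Sum>p\<in>{x. u x \<noteq> 0}. \<Sum>q\<in>{x. v x \<noteq> 0}. u p * v q * basis_prod L p q y)"
    by (simp add: matsuo_mult_def)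
  also have "\<dots> = (\<Sum>p\<in>S. \<Sum>q\<in>{x. v x \<noteq> 0}. u p * v q * basis_prod L p q y)"
    by (rule sum.mono_neutral_left[OF assms(1) assms(3)]) simp
  also have "\<dots> = (\<Sum>p\<in>S. \<Sum>q\<in>T. u p * v q * basis_prod L p q y)"
    by (rule sum.cong[OF refl], rule sum.mono_neutral_left[OF assms(2) assms(4)]) simp
  finally show ?thesis .
qed

lemma mm_comm: "matsuo_mult L u v = matsuo_mult L v u"
proof
  fix y
  show "matsuo_mult L u v y = matsuo_mult L v u y"
    unfolding matsuo_mult_def
    by (subst sum.swap) (simp add: K_sym[of L] mult_ac)
qed

lemma mm_zero_right[simp]: "matsuo_mult L u (\<lambda>x. 0) = (\<lambda>x. 0)"
  by (simp add: matsuo_mult_def)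

lemma mm_zero_left[simp]: "matsuo_mult L (\<lambda>x. 0) u = (\<lambda>x. 0)"
  by (simp add: matsuo_mult_def)

lemma supp_sum: fixes f :: "'i \<Rightarrow> 'a \<Rightarrow> 'r::comm_ring_1" shows "{x. (\<Sum>i\<in>I. c i * f i x) \<noteq> 0} \<subseteq> (\<Union>i\<in>I. {x. f i x \<noteq> 0})"
proof
  fix x assume "x \<in> {x. (\<Sum>i\<in>I. c i * f i x) \<noteq> 0}"
  then have "(\<Sum>i\<in>I. c i * f i x) \<noteq> 0" by simp
  then obtain i where "i \<in> I" "c i * f i x \<noteq> 0" by (rule sum.not_neutral_contains_not_neutral)
  moreover from \<open>c i * f i x \<noteq> 0\<close> have "f i x \<noteq> 0" by (cases "f i x = 0") auto
  ultimately show "x \<in> (\<Union>i\<in>I. {x. f i x \<noteq> 0})" by blast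
qed

lemma fin_sum:
  fixes f :: "'i \<Rightarrow> 'a \<Rightarrow> 'r::comm_ring_1"
  assumes "finite I" "\<And>i. i \<in> I \<Longrightarrow> finite {x. f i x \<noteq> 0}"
  shows "finite {x. (\<Sum>i\<in>I. c i * f i x) \<noteq> 0}"
  by (rule finite_subset[OF supp_sum]) (use assms in auto)

lemma linR:
  assumes I: "finite I" and f: "\<And>i. i \<in> I \<Longrightarrow> finite {x. f i x \<noteq> 0}" and z: "finite {x. z x \<noteq> 0}"
  shows "matsuo_mult L z (\<lambda>x. \<Sum>i\<in>I. c i * f i x) y = (\<Sum>i\<in>I. c i * matsuo_mult L z (f i) y)"
proof -
  define T where "T = (\<Union>i\<in>I. {x. f i x \<noteq> 0})"
  define S where "S = {x. z x \<noteq> 0}"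
  have fT: "finite T" using I f by (simp add: T_def)
  have sub: "{x. (\<Sum>i\<in>I. c i * f i x) \<noteq> 0} \<subseteq> T" unfolding T_def by (rule supp_sum)
  have zS: "finite S" "{x. z x \<noteq> 0} \<subseteq> S" using z by (auto simp: S_def)
  have subi: "\<And>i. i \<in> I \<Longrightarrow> {x. f i x \<noteq> 0} \<subseteq> T" by (auto simp: T_def)
  have "matsuo_mult L z (\<lambda>x. \<Sum>i\<in>I. c i * f i x) y
      = (\<Sum>p\<in>S. \<Sum>q\<in>T. z p * (\<Sum>i\<in>I. c i * f i q) * basis_prod L p q y)"
    by (rule mm_repr[OF zS(1) fT zS(2) sub])
  also have "\<dots> = (\<Sum>p\<in>S. \<Sum>q\<in>T. \<Sum>i\<in>I. c i * (z p * f i q * basis_prod L p q y))"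
    by (simp add: sum_distrib_left sum_distrib_right mult_ac)
  also have "\<dots> = (\<Sum>p\<in>S. \<Sum>i\<in>I. \<Sum>q\<in>T. c i * (z p * f i q * basis_prod L p q y))"
    by (rule sum.cong[OF refl], rule sum.swap)
  also have "\<dots> = (\<Sum>i\<in>I. \<Sum>p\<in>S. \<Sum>q\<in>T. c i * (z p * f i q * basis_prod L p q y))"
    by (rule sum.swap)
  also have "\<dots> = (\<Sum>i\<in>I. c i * (\<Sum>p\<in>S. \<Sum>q\<in>T. z p * f i q * basis_prod L p q y))"
    by (simp add: sum_distrib_left)
  also have "\<dots> = (\<Sum>i\<in>I. c i * matsuo_mult L z (f i) y)"
  proof (rule sum.cong[OF refl])
    fix i assume "i \<in> I"
    show "c i * (\<Sum>p\<in>S. \<Sum>q\<in>T. z p * f i q * basis_prod L p q y) = c i * matsuo_mult L z (f i) y"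
      using mm_repr[OF zS(1) fT zS(2) subi[OF \<open>i \<in> I\<close>], of L y] by simp
  qed
  finally show ?thesis .
qed

lemma linL:
  assumes I: "finite I" and f: "\<And>i. i \<in> I \<Longrightarrow> finite {x. f i x \<noteq> 0}" and z: "finite {x. z x \<noteq> 0}"
  shows "matsuo_mult L (\<lambda>x. \<Sum>i\<in>I. c i * f i x) z y = (\<Sum>i\<in>I. c i * matsuo_mult L (f i) z y)"
  using linR[where L=L and c=c and y=y, OF assms] by (simp add: mm_comm[of L _ z])

lemma bexp:
  assumes "finite S" "{x. u x \<noteq> 0} \<subseteq> S"
  shows "u = (\<lambda>y. \<Sum>p\<in>S. u p * basis_vec p y)"
proof
  fix y
  have "(\<Sum>p\<in>S. u p * basis_vec p y) = (\<Sum>p\<in>S. if p = y then u y else 0)"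
    by (rule sum.cong) (auto simp: basis_vec_def)
  also have "\<dots> = u y" using assms by auto
  finally show "u y = (\<Sum>p\<in>S. u p * basis_vec p y)" by simp
qed

lemma fin_e: "finite {x. (basis_vec p x :: 'r::comm_ring_1) \<noteq> 0}"
  by (rule finite_subset[of _ "{p}"]) (auto simp: basis_vec_def)

lemma fin_K: "finite {x. (basis_prod L p q x :: 'r::comm_ring_1) \<noteq> 0}"
  by (rule finite_subset[of _ "{p,q,wedge L p q}"]) (auto simp: basis_prod_def basis_vec_def)

lemma M_ee: "matsuo_mult L (basis_vec a) (basis_vec b) = (basis_prod L a b :: _ \<Rightarrow> 'r::comm_ring_1)"
proof
  fix y
  show "matsuo_mult L (basis_vec a) (basis_vec b) y = (basis_prod L a b y :: 'r)"
    by (subst mm_repr[of "{a}" "{b}"]) (auto simp: basis_vec_def)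
qed

lemma mm_as_sum:
  assumes "finite {x. u x \<noteq> 0}" "finite {x. v x \<noteq> 0}"
  shows "matsuo_mult L u v = (\<lambda>y. \<Sum>p\<in>{x. u x \<noteq> 0}. u p * (\<Sum>q\<in>{x. v x \<noteq> 0}. v q * basis_prod L p q y))"
proof
  fix y
  show "matsuo_mult L u v y = (\<Sum>p\<in>{x. u x \<noteq> 0}. u p * (\<Sum>q\<in>{x. v x \<noteq> 0}. v q * basis_prod L p q y))"
    by (subst mm_repr[OF assms order.refl order.refl]) (simp add: sum_distrib_left mult_ac)
qed

lemma fin_M:
  assumes "finite {x. u x \<noteq> 0}" "finite {x. v x \<noteq> 0}"
  shows "finite {x. (matsuo_mult L u v x :: 'r::comm_ring_1) \<noteq> 0}"
  unfolding mm_as_sum[OF assms]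
  by (rule fin_sum[OF assms(1)], rule fin_sum[OF assms(2)], rule fin_K)


context fgeo
begin

lemma ncol_sym: "\<not> col p q \<Longrightarrow> \<not> col q p" using col_sym by auto

lemma K_col: "col p q \<Longrightarrow> (basis_prod L p q x::'r::comm_ring_1) = basis_vec p x + basis_vec q x + basis_vec (w p q) x"
  by (simp add: basis_prod_def)

lemma K_ncol: "\<not> col p q \<Longrightarrow> (basis_prod L p q x::'r::comm_ring_1) = 0"
  by (simp add: basis_prod_def)

lemma K_fun:
  assumes "col p q"
  shows "(basis_prod L p q :: _ \<Rightarrow> 'r::comm_ring_1) = (\<lambda>x. \<Sum>i\<in>{p,q,w p q}. 1 * basis_vec i x)"
proof
  fix x
  note d = ln_all(13-15)[OF col_line[OF assms]]
  show "(basis_prod L p q x :: 'r) = (\<Sum>i\<in>{p,q,w p q}. 1 * basis_vec i x)"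
    using d assms by (simp add: basis_prod_def)
qed

lemma M_eK:
  "matsuo_mult L (basis_vec z) (basis_prod L p q) y = (if col p q then basis_prod L z p y + basis_prod L z q y + basis_prod L z (w p q) y else (0::'r::comm_ring_1))"
proof (cases "col p q")
  case True
  note d = ln_all(13-15)[OF col_line[OF True]]
  have "matsuo_mult L (basis_vec z) (basis_prod L p q) y
      = matsuo_mult L (basis_vec z) (\<lambda>x. \<Sum>i\<in>{p,q,w p q}. 1 * basis_vec i x) y"
    by (simp only: K_fun[OF True])
  also have "\<dots> = (\<Sum>i\<in>{p,q,w p q}. 1 * matsuo_mult L (basis_vec z) (basis_vec i) y)"
    by (rule linR) (simp_all add: fin_e)
  also have "\<dots> = (basis_prod L z p y + basis_prod L z q y + basis_prod L z (w p q) y :: 'r)"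
    using d by (simp add: M_ee add_ac)
  finally show ?thesis using True by simp
next
  case False
  then have "(basis_prod L p q :: _ \<Rightarrow> 'r) = (\<lambda>x. 0)" by (simp add: basis_prod_def)
  then show ?thesis using False by simp
qed

lemma M_Ke:
  "matsuo_mult L (basis_prod L p q) (basis_vec z) y = (if col p q then basis_prod L z p y + basis_prod L z q y + basis_prod L z (w p q) y else (0::'r::comm_ring_1))"
  by (simp add: mm_comm[of L "basis_prod L p q"] M_eK)

lemma char2:
  assumes c2: "(2::'r::comm_ring_1) = 0"
  shows "\<And>y::'r. y + y = 0" "\<And>y z::'r. y + (y + z) = z"
proof -
  fix y z :: 'r
  have "y + y = 2 * y" by (rule mult_2[symmetric])
  also have "\<dots> = 0" using c2 by simp
  finally show yy: "y + y = 0" .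
  show "y + (y + z) = z" by (simp add: add.assoc[symmetric] yy)
qed

lemma perm3:
  assumes "{x,y,z} \<in> L"
  shows "{y,x,z} \<in> L" "{x,z,y} \<in> L" "{z,x,y} \<in> L" "{y,z,x} \<in> L" "{z,y,x} \<in> L"
proof -
  have e: "{y,x,z} = {x,y,z}" "{x,z,y} = {x,y,z}" "{z,x,y} = {x,y,z}" "{y,z,x} = {x,y,z}" "{z,y,x} = {x,y,z}"
    by blast+
  show "{y,x,z} \<in> L" "{x,z,y} \<in> L" "{z,x,y} \<in> L" "{y,z,x} \<in> L" "{z,y,x} \<in> L"
    using assms unfolding e by simp_all
qed

lemma BI:
  assumes c2: "(2::'r::comm_ring_1) = 0"
  shows "matsuo_mult L (basis_vec a) (basis_prod L p q) x
    = matsuo_mult L (basis_prod L a p) (basis_vec q) x + (matsuo_mult L (basis_vec p) (basis_prod L a q) x :: 'r)"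
proof -
  note C = char2[OF c2] c2
  show ?thesis
  proof (cases "col p q")
    case pq: False
    note npq = pq ncol_sym[OF pq]
    show ?thesis
    proof (cases "p = q")
      case True then show ?thesis by (simp add: M_eK M_Ke C)
    next
      case pq': False
      show ?thesis
      proof (cases "col a p")
        case ap: True
        define p' where "p' = w a p"
        have lp: "{a,p,p'} \<in> L" using col_line[OF ap] p'_def by simp
        note Fp = ln_all[OF lp]
        show ?thesis
        proof (cases "col a q")
          case aq: True
          define q' where "q' = w a q"
          have lq: "{a,q,q'} \<in> L" using col_line[OF aq] q'_def by simp
          note Fq = ln_all[OF lq]
          have "q \<noteq> p'" using Fp pq by auto
          then have ne: "{a,p,p'} \<noteq> {a,q,q'}" using Fq pq' by auto
          from gq[OF lp lq ne] obtain s where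
            "({p,q,s} \<in> L \<and> {p',q',s} \<in> L) \<or> ({p,q',s} \<in> L \<and> {p',q,s} \<in> L)" by blast
          then have ls: "{p,q',s} \<in> L" "{p',q,s} \<in> L" using ln_all(1)[of p q s] pq by auto
          note F1 = ln_all[OF ls(1)] and F2 = ln_all[OF ls(2)]
          show ?thesis using npq Fp Fq F1 F2
            by (simp add: M_eK M_Ke K_col K_ncol add_ac C)
        next
          case aq: False
          note naq = aq ncol_sym[OF aq]
          have qn: "q \<notin> {p',a,p}" using Fp pq pq' aq by auto
          have lp2: "{p',a,p} \<in> L" using perm3(3)[OF lp] .
          have "\<not> col q p'" using Z1[OF lp2 qn] ncol_sym[OF aq] ncol_sym[OF pq] by blast
          note nq = this ncol_sym[OF this]
          show ?thesis using npq naq nq Fp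
            by (simp add: M_eK M_Ke K_col K_ncol add_ac C)
        qed
      next
        case ap: False
        note nap = ap ncol_sym[OF ap]
        show ?thesis
        proof (cases "col a q")
          case aq: True
          define q' where "q' = w a q"
          have lq: "{a,q,q'} \<in> L" using col_line[OF aq] q'_def by simp
          note Fq = ln_all[OF lq]
          have pn: "p \<notin> {q',a,q}" using Fq pq pq' ap by auto
          have lq2: "{q',a,q} \<in> L" using perm3(3)[OF lq] .
          have "\<not> col p q'" using Z1[OF lq2 pn] ncol_sym[OF ap] pq by blast
          note np = this ncol_sym[OF this]
          show ?thesis using npq nap np Fq
            by (simp add: M_eK M_Ke K_col K_ncol add_ac C)
        next
          case aq: False
          note naq = aq ncol_sym[OF aq]
          show ?thesis using npq nap naq
            by (simp add: M_eK M_Ke K_col K_ncol add_ac C)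
        qed
      qed
    qed
  next
    case pq: True
    define r where "r = w p q"
    have lr: "{p,q,r} \<in> L" using col_line[OF pq] r_def by simp
    note Fr = ln_all[OF lr]
    show ?thesis
    proof (cases "a \<in> {p,q,r}")
      case True
      then consider "a = p" | "a = q" | "a = r" by auto
      then show ?thesis
      proof cases
        case 1 then show ?thesis using Fr by (simp add: M_eK M_Ke K_col K_ncol add_ac C)
      next
        case 2 then show ?thesis using Fr by (simp add: M_eK M_Ke K_col K_ncol add_ac C)
      next
        case 3 then show ?thesis using Fr by (simp add: M_eK M_Ke K_col K_ncol add_ac C)
      qed
    next
      case an: False
      have lq: "{q,p,r} \<in> L" and lr': "{r,p,q} \<in> L" using perm3[OF lr] by auto
      have an2: "a \<notin> {q,p,r}" "a \<notin> {r,p,q}" using an by auto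
      have z1: "col a p \<Longrightarrow> col a q \<or> col a r" using Z1[OF lr an] .
      have z2: "col a q \<Longrightarrow> col a p \<or> col a r" using Z1[OF lq an2(1)] .
      have z3: "col a r \<Longrightarrow> col a p \<or> col a q" using Z1[OF lr' an2(2)] by blast
      have z4: "col a p \<Longrightarrow> col a q \<Longrightarrow> col a r \<Longrightarrow> False" using Z2[OF lr an] .
      have "(\<not> col a p \<and> \<not> col a q \<and> \<not> col a r) \<or> (col a p \<and> col a q \<and> \<not> col a r)
          \<or> (col a p \<and> \<not> col a q \<and> col a r) \<or> (\<not> col a p \<and> col a q \<and> col a r)"
        using z1 z2 z3 z4 by blast
      then show ?thesis
      proof (elim disjE conjE)
        assume "\<not> col a p" "\<not> col a q" "\<not> col a r"
        then show ?thesis using Fr by (simp add: M_eK M_Ke K_col K_ncol add_ac C)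
      next
        assume ap: "col a p" and aq: "col a q" and ar: "\<not> col a r"
        define p' where "p' = w a p"
        have lp: "{a,p,p'} \<in> L" using col_line[OF ap] p'_def by simp
        note Fp = ln_all[OF lp]
        define q' where "q' = w a q"
        have lq': "{a,q,q'} \<in> L" using col_line[OF aq] q'_def by simp
        note Fq = ln_all[OF lq']
        have lp2: "{p,a,p'} \<in> L" using perm3(1)[OF lp] .
        have ne: "{p,q,r} \<noteq> {p,a,p'}" using an by auto
        from gq[OF lr lp2 ne] obtain s where
          "({q,a,s} \<in> L \<and> {r,p',s} \<in> L) \<or> ({q,p',s} \<in> L \<and> {r,a,s} \<in> L)" by blast
        then have ls: "{q,a,s} \<in> L" "{r,p',s} \<in> L" using ln_all(2)[of r a s] ar by auto
        note F1 = ln_all[OF ls(1)] and F2 = ln_all[OF ls(2)]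
        have sq: "s = q'" using F1 Fq by simp
        have "p' \<noteq> q"
        proof
          assume "p' = q"
          then have "{a,p,q} \<in> L" using lp by simp
          then have "w p q = a" by (rule ln_all(11))
          then show False using r_def an by simp
        qed
        then have "p' \<notin> {a,q,s}" using Fp F2 by auto
        moreover have la: "{a,q,s} \<in> L" using perm3(1)[OF ls(1)] .
        ultimately have n1: "\<not> col p' q" using Z2[OF la, of p'] Fp(4) F2(5) by blast
        have "s \<noteq> p"
        proof
          assume "s = p"
          then have "{q,a,p} \<in> L" using ls by simp
          then have "w p q = a" by (rule ln_all(10))
          then show False using r_def an by simp
        qed
        then have "s \<notin> {a,p,p'}" using F1 F2 by auto
        then have n2: "\<not> col s p" using Z2[OF lp, of s] F1(6) F2(6) by blast
        show ?thesis using Fr Fp Fq F1 F2 n1 ncol_sym[OF n1] n2 ncol_sym[OF n2] ar ncol_sym[OF ar] sq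
          by (simp add: M_eK M_Ke K_col K_ncol add_ac C)
      next
        assume ap: "col a p" and aq: "\<not> col a q" and ar: "col a r"
        define p' where "p' = w a p"
        have lp: "{a,p,p'} \<in> L" using col_line[OF ap] p'_def by simp
        note Fp = ln_all[OF lp]
        have lp2: "{p,a,p'} \<in> L" using perm3(1)[OF lp] .
        have ne: "{p,q,r} \<noteq> {p,a,p'}" using an by auto
        from gq[OF lr lp2 ne] obtain s where
          "({q,a,s} \<in> L \<and> {r,p',s} \<in> L) \<or> ({q,p',s} \<in> L \<and> {r,a,s} \<in> L)" by blast
        then have ls: "{q,p',s} \<in> L" "{r,a,s} \<in> L" using ln_all(2)[of q a s] aq by auto
        note F1 = ln_all[OF ls(1)] and F2 = ln_all[OF ls(2)]
        show ?thesis using Fr Fp F1 F2 aq ncol_sym[OF aq]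
          by (simp add: M_eK M_Ke K_col K_ncol add_ac C)
      next
        assume ap: "\<not> col a p" and aq: "col a q" and ar: "col a r"
        define q' where "q' = w a q"
        have lq': "{a,q,q'} \<in> L" using col_line[OF aq] q'_def by simp
        note Fq = ln_all[OF lq']
        have lq2: "{q,a,q'} \<in> L" using perm3(1)[OF lq'] .
        have ne: "{q,p,r} \<noteq> {q,a,q'}" using an by auto
        from gq[OF lq lq2 ne] obtain s where
          "({p,a,s} \<in> L \<and> {r,q',s} \<in> L) \<or> ({p,q',s} \<in> L \<and> {r,a,s} \<in> L)" by blast
        then have ls: "{p,q',s} \<in> L" "{r,a,s} \<in> L" using ln_all(2)[of p a s] ap by auto
        note F1 = ln_all[OF ls(1)] and F2 = ln_all[OF ls(2)]
        show ?thesis using Fr Fq F1 F2 ap ncol_sym[OF ap]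
          by (simp add: M_eK M_Ke K_col K_ncol add_ac C)
      qed
    qed
  qed
qed

end


context fgeo
begin

lemma fin_l: "l \<in> L \<Longrightarrow> finite l"
  using lcard[of l] by (intro card_ge_0_finite) simp

lemma line_elem_sum: "finite l \<Longrightarrow> (line_elem l :: _ \<Rightarrow> 'r::comm_ring_1) = (\<lambda>x. \<Sum>i\<in>l. 1 * basis_vec i x)"
  by (rule ext) (simp add: line_elem_def basis_vec_def)

lemma fin_le: "l \<in> L \<Longrightarrow> finite {x. (line_elem l x :: 'r::comm_ring_1) \<noteq> 0}"
  by (rule finite_subset[of _ l]) (auto simp: line_elem_def fin_l)

lemma mmR_exp:
  assumes "finite {x. z x \<noteq> 0}" "finite {x. u x \<noteq> 0}"
  shows "matsuo_mult L z u y = (\<Sum>p\<in>{x. u x \<noteq> 0}. u p * matsuo_mult L z (basis_vec p) y :: 'r::comm_ring_1)"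
proof -
  have "matsuo_mult L z u y = matsuo_mult L z (\<lambda>x. \<Sum>p\<in>{x. u x \<noteq> 0}. u p * basis_vec p x) y"
    by (rule arg_cong[where f="\<lambda>w. matsuo_mult L z w y"], rule bexp) (use assms in auto)
  also have "\<dots> = (\<Sum>p\<in>{x. u x \<noteq> 0}. u p * matsuo_mult L z (basis_vec p) y)"
    by (rule linR) (use assms in \<open>simp_all add: fin_e\<close>)
  finally show ?thesis .
qed

lemma mmL_exp:
  assumes "finite {x. z x \<noteq> 0}" "finite {x. u x \<noteq> 0}"
  shows "matsuo_mult L u z y = (\<Sum>p\<in>{x. u x \<noteq> 0}. u p * matsuo_mult L (basis_vec p) z y :: 'r::comm_ring_1)"
  using mmR_exp[OF assms, of y] by (simp add: mm_comm[of L _ z])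

lemma Ml:
  assumes "l \<in> L" "finite {x. v x \<noteq> 0}"
  shows "matsuo_mult L (line_elem l) v y = (\<Sum>i\<in>l. matsuo_mult L (basis_vec i) v y :: 'r::comm_ring_1)"
proof -
  have "matsuo_mult L (line_elem l) v y = matsuo_mult L (\<lambda>x. \<Sum>i\<in>l. 1 * basis_vec i x) v y"
    by (simp only: line_elem_sum[OF fin_l[OF assms(1)]])
  also have "\<dots> = (\<Sum>i\<in>l. 1 * matsuo_mult L (basis_vec i) v y)"
    by (rule linL) (use assms fin_l in \<open>simp_all add: fin_e\<close>)
  finally show ?thesis by simp
qed

lemma Dpt:
  assumes c2: "(2::'r::comm_ring_1) = 0" and fu: "finite {x. u x \<noteq> 0}" and fv: "finite {x. v x \<noteq> 0}"
  shows "matsuo_mult L (basis_vec a) (matsuo_mult L u v) y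
    = matsuo_mult L (matsuo_mult L (basis_vec a) u) v y + (matsuo_mult L u (matsuo_mult L (basis_vec a) v) y :: 'r)"
proof -
  define S where "S = {x. u x \<noteq> 0}"
  define T where "T = {x. v x \<noteq> 0}"
  have fS: "finite S" and fT: "finite T" using fu fv by (simp_all add: S_def T_def)
  define G where "G p = (\<lambda>y. \<Sum>q\<in>T. v q * basis_prod L p q y)" for p
  have finG: "finite {x. (G p x :: 'r) \<noteq> 0}" for p
    unfolding G_def by (rule fin_sum[OF fT], rule fin_K)
  have uv: "matsuo_mult L u v = (\<lambda>y. \<Sum>p\<in>S. u p * G p y)"
    using mm_as_sum[OF fu fv] by (simp add: S_def T_def G_def)
  define Xa where "Xa p q = (matsuo_mult L (basis_prod L a p) (basis_vec q) y :: 'r)" for p q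
  define Ya where "Ya p q = (matsuo_mult L (basis_vec p) (basis_prod L a q) y :: 'r)" for p q
  have "matsuo_mult L (basis_vec a) (matsuo_mult L u v) y = (\<Sum>p\<in>S. u p * matsuo_mult L (basis_vec a) (G p) y)"
    unfolding uv by (rule linR) (simp_all add: fS finG fin_e)
  also have "\<dots> = (\<Sum>p\<in>S. u p * (\<Sum>q\<in>T. v q * matsuo_mult L (basis_vec a) (basis_prod L p q) y))"
    unfolding G_def by (subst linR) (simp_all add: fT fin_K fin_e)
  also have "\<dots> = (\<Sum>p\<in>S. \<Sum>q\<in>T. u p * (v q * Xa p q)) + (\<Sum>p\<in>S. \<Sum>q\<in>T. u p * (v q * Ya p q))"
    by (simp add: BI[OF c2, where a=a] Xa_def Ya_def distrib_left sum.distrib sum_distrib_left)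
  finally have LHS: "matsuo_mult L (basis_vec a) (matsuo_mult L u v) y
     = (\<Sum>p\<in>S. \<Sum>q\<in>T. u p * (v q * Xa p q)) + (\<Sum>p\<in>S. \<Sum>q\<in>T. u p * (v q * Ya p q))" .
  have eau: "matsuo_mult L (basis_vec a) u = (\<lambda>y. \<Sum>p\<in>S. u p * basis_prod L a p y)"
  proof
    fix y'
    show "matsuo_mult L (basis_vec a) u y' = (\<Sum>p\<in>S. u p * basis_prod L a p y')"
      using mmR_exp[OF fin_e fu, where y=y'] by (simp add: S_def M_ee)
  qed
  have eav: "matsuo_mult L (basis_vec a) v = (\<lambda>y. \<Sum>q\<in>T. v q * basis_prod L a q y)"
  proof
    fix y'
    show "matsuo_mult L (basis_vec a) v y' = (\<Sum>q\<in>T. v q * basis_prod L a q y')"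
      using mmR_exp[OF fin_e fv, where y=y'] by (simp add: T_def M_ee)
  qed
  have "matsuo_mult L (matsuo_mult L (basis_vec a) u) v y = (\<Sum>p\<in>S. u p * matsuo_mult L (basis_prod L a p) v y)"
    unfolding eau by (rule linL) (simp_all add: fS fin_K fv)
  also have "\<dots> = (\<Sum>p\<in>S. \<Sum>q\<in>T. u p * (v q * Xa p q))"
    by (simp add: mmR_exp[OF fin_K fv] T_def Xa_def sum_distrib_left)
  finally have R1: "matsuo_mult L (matsuo_mult L (basis_vec a) u) v y = (\<Sum>p\<in>S. \<Sum>q\<in>T. u p * (v q * Xa p q))" .
  have "matsuo_mult L u (matsuo_mult L (basis_vec a) v) y = (\<Sum>q\<in>T. v q * matsuo_mult L u (basis_prod L a q) y)"
    unfolding eav by (rule linR) (simp_all add: fT fin_K fu)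
  also have "\<dots> = (\<Sum>q\<in>T. \<Sum>p\<in>S. v q * (u p * Ya p q))"
    by (simp add: mmL_exp[OF fin_K fu] S_def Ya_def sum_distrib_left)
  also have "\<dots> = (\<Sum>p\<in>S. \<Sum>q\<in>T. v q * (u p * Ya p q))"
    by (rule sum.swap)
  also have "\<dots> = (\<Sum>p\<in>S. \<Sum>q\<in>T. u p * (v q * Ya p q))"
    by (simp add: mult_ac)
  finally have R2: "matsuo_mult L u (matsuo_mult L (basis_vec a) v) y = (\<Sum>p\<in>S. \<Sum>q\<in>T. u p * (v q * Ya p q))" .
  show ?thesis using LHS R1 R2 by simp
qed

lemma Dl:
  assumes c2: "(2::'r::comm_ring_1) = 0" and l: "l \<in> L" and fu: "finite {x. u x \<noteq> 0}" and fv: "finite {x. v x \<noteq> 0}"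
  shows "matsuo_mult L (line_elem l) (matsuo_mult L u v) y
    = matsuo_mult L (matsuo_mult L (line_elem l) u) v y + (matsuo_mult L u (matsuo_mult L (line_elem l) v) y :: 'r)"
proof -
  have fl: "finite l" using fin_l[OF l] .
  have "matsuo_mult L (line_elem l) (matsuo_mult L u v) y = (\<Sum>i\<in>l. matsuo_mult L (basis_vec i) (matsuo_mult L u v) y)"
    by (rule Ml[OF l fin_M[OF fu fv]])
  also have "\<dots> = (\<Sum>i\<in>l. matsuo_mult L (matsuo_mult L (basis_vec i) u) v y)
      + (\<Sum>i\<in>l. matsuo_mult L u (matsuo_mult L (basis_vec i) v) y)"
    by (simp add: Dpt[OF c2 fu fv] sum.distrib)
  also have "(\<Sum>i\<in>l. matsuo_mult L (matsuo_mult L (basis_vec i) u) v y) = matsuo_mult L (matsuo_mult L (line_elem l) u) v y"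
  proof -
    have e: "matsuo_mult L (line_elem l) u = (\<lambda>y. \<Sum>i\<in>l. 1 * matsuo_mult L (basis_vec i) u y)"
      by (rule ext) (simp add: Ml[OF l fu])
    show ?thesis unfolding e by (subst linL) (simp_all add: fl fin_M fin_e fu fv)
  qed
  also have "(\<Sum>i\<in>l. matsuo_mult L u (matsuo_mult L (basis_vec i) v) y) = matsuo_mult L u (matsuo_mult L (line_elem l) v) y"
  proof -
    have e: "matsuo_mult L (line_elem l) v = (\<lambda>y. \<Sum>i\<in>l. 1 * matsuo_mult L (basis_vec i) v y)"
      by (rule ext) (simp add: Ml[OF l fv])
    show ?thesis unfolding e by (subst linR) (simp_all add: fl fin_M fin_e fu fv)
  qed
  finally show ?thesis .
qed

lemma IDtwo:
  assumes c2: "(2::'r::comm_ring_1) = 0" and l: "{a,b,c} \<in> L" and pn: "p \<notin> {a,b,c}"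
    and ap: "col a p" and bp: "col b p" and cp: "\<not> col c p"
  shows "(\<Sum>z\<in>{a,b,c}. \<Sum>i\<in>{a,b,c}. matsuo_mult L (basis_vec z) (basis_prod L i p) y) = (\<Sum>i\<in>{a,b,c}. basis_prod L i p y :: 'r)"
proof -
  note C = char2[OF c2] c2
  note Fl = ln_all[OF l]
  define q where "q = w a p"
  have la: "{a,p,q} \<in> L" using col_line[OF ap] q_def by simp
  note Fa = ln_all[OF la]
  have ne: "{a,b,c} \<noteq> {a,p,q}" using pn by auto
  from gq[OF l la ne] obtain s where
    "({b,p,s} \<in> L \<and> {c,q,s} \<in> L) \<or> ({b,q,s} \<in> L \<and> {c,p,s} \<in> L)" by blast
  then have ls: "{b,p,s} \<in> L" "{c,q,s} \<in> L" using ln_all(1)[of c p s] cp by auto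
  note Fb = ln_all[OF ls(1)] and Fc = ln_all[OF ls(2)]
  have "q \<noteq> b"
  proof
    assume "q = b"
    then have "{a,p,b} \<in> L" using la by simp
    then have "w a b = p" by (rule ln_all(9))
    then show False using Fl(7) pn by simp
  qed
  then have qn: "q \<notin> {a,c,b}" using Fa Fc by auto
  have lacb: "{a,c,b} \<in> L" using perm3(2)[OF l] .
  have nqb: "\<not> col q b" using Z2[OF lacb qn] Fa(4) Fc(2) by blast
  have "s \<noteq> a"
  proof
    assume "s = a"
    then have "{b,p,a} \<in> L" using ls by simp
    then have "w a b = p" by (rule ln_all(10))
    then show False using Fl(7) pn by simp
  qed
  then have sn: "s \<notin> {b,c,a}" using Fb Fc by auto
  have lbca: "{b,c,a} \<in> L" using perm3(4)[OF l] .
  have nsa: "\<not> col s a" using Z2[OF lbca sn] Fb(4) Fc(4) by blast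
  show ?thesis using Fl Fa Fb Fc nqb ncol_sym[OF nqb] nsa ncol_sym[OF nsa] cp ncol_sym[OF cp] pn
    by (simp add: M_eK K_col K_ncol add_ac C)
qed

lemma IDcore:
  assumes c2: "(2::'r::comm_ring_1) = 0" and l: "{a,b,c} \<in> L"
  shows "(\<Sum>z\<in>{a,b,c}. \<Sum>i\<in>{a,b,c}. matsuo_mult L (basis_vec z) (basis_prod L i p) y) = (\<Sum>i\<in>{a,b,c}. basis_prod L i p y :: 'r)"
proof -
  note C = char2[OF c2] c2
  note Fl = ln_all[OF l]
  show ?thesis
  proof (cases "p \<in> {a,b,c}")
    case True
    then consider "p = a" | "p = b" | "p = c" by auto
    then show ?thesis
    proof cases
      case 1 then show ?thesis using Fl by (simp add: M_eK K_col K_ncol add_ac C)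
    next
      case 2 then show ?thesis using Fl by (simp add: M_eK K_col K_ncol add_ac C)
    next
      case 3 then show ?thesis using Fl by (simp add: M_eK K_col K_ncol add_ac C)
    qed
  next
    case pn: False
    have lacb: "{a,c,b} \<in> L" and lbca: "{b,c,a} \<in> L" and lbac: "{b,a,c} \<in> L" and lcab: "{c,a,b} \<in> L"
      using perm3[OF l] by auto
    have e1: "{a,c,b} = {a,b,c}" and e2: "{b,c,a} = {a,b,c}" and e3: "{b,a,c} = {a,b,c}" and e4: "{c,a,b} = {a,b,c}"
      by blast+
    have pn2: "p \<notin> {a,c,b}" "p \<notin> {b,c,a}" "p \<notin> {b,a,c}" "p \<notin> {c,a,b}" using pn by auto
    have z1: "col p a \<Longrightarrow> col p b \<or> col p c" using Z1[OF l pn] .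
    have z2: "col p b \<Longrightarrow> col p a \<or> col p c" using Z1[OF lbac pn2(3)] .
    have z3: "col p c \<Longrightarrow> col p a \<or> col p b" using Z1[OF lcab pn2(4)] .
    have z4: "col p a \<Longrightarrow> col p b \<Longrightarrow> col p c \<Longrightarrow> False" using Z2[OF l pn] .
    have cs: "col p x = col x p" for x using col_sym .
    have "(\<not> col a p \<and> \<not> col b p \<and> \<not> col c p) \<or> (col a p \<and> col b p \<and> \<not> col c p)
        \<or> (col a p \<and> \<not> col b p \<and> col c p) \<or> (\<not> col a p \<and> col b p \<and> col c p)"
      using z1 z2 z3 z4 unfolding cs by blast
    then show ?thesis
    proof (elim disjE conjE)
      assume "\<not> col a p" "\<not> col b p" "\<not> col c p"
      then show ?thesis using Fl by (simp add: M_eK K_ncol)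
    next
      assume "col a p" "col b p" "\<not> col c p"
      then show ?thesis using IDtwo[OF c2 l pn] by blast
    next
      assume "col a p" "\<not> col b p" "col c p"
      then show ?thesis using IDtwo[OF c2 lacb pn2(1)] unfolding e1 by blast
    next
      assume "\<not> col a p" "col b p" "col c p"
      then show ?thesis using IDtwo[OF c2 lbca pn2(2)] unfolding e2 by blast
    qed
  qed
qed

lemma IDb:
  assumes c2: "(2::'r::comm_ring_1) = 0" and l: "l \<in> L"
  shows "matsuo_mult L (line_elem l) (matsuo_mult L (line_elem l) (basis_vec p)) y
    = (matsuo_mult L (line_elem l) (basis_vec p) y :: 'r)"
proof -
  have "\<exists>a b c. l = {a,b,c} \<and> a \<noteq> b \<and> b \<noteq> c \<and> a \<noteq> c" using lcard[OF l] by (simp only: card_3_iff)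
  then obtain a b c where abc: "l = {a,b,c}" by blast
  have fl: "finite l" using fin_l[OF l] .
  have e: "matsuo_mult L (line_elem l) (basis_vec p) = (\<lambda>y. \<Sum>i\<in>l. 1 * (basis_prod L i p y :: 'r))"
    by (rule ext) (simp add: Ml[OF l fin_e] M_ee)
  have step: "matsuo_mult L (basis_vec z) (matsuo_mult L (line_elem l) (basis_vec p)) y
        = (\<Sum>i\<in>l. 1 * matsuo_mult L (basis_vec z) (basis_prod L i p) y :: 'r)" for z
  proof -
    have "matsuo_mult L (basis_vec z) (matsuo_mult L (line_elem l) (basis_vec p)) y
        = matsuo_mult L (basis_vec z) (\<lambda>y. \<Sum>i\<in>l. 1 * (basis_prod L i p y :: 'r)) y"
      by (simp only: e)
    also have "\<dots> = (\<Sum>i\<in>l. 1 * matsuo_mult L (basis_vec z) (basis_prod L i p) y)"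
      by (rule linR) (simp_all add: fl fin_K fin_e)
    finally show ?thesis .
  qed
  have "matsuo_mult L (line_elem l) (matsuo_mult L (line_elem l) (basis_vec p)) y
      = (\<Sum>z\<in>l. matsuo_mult L (basis_vec z) (matsuo_mult L (line_elem l) (basis_vec p)) y :: 'r)"
    by (rule Ml[OF l fin_M[OF fin_le[OF l] fin_e]])
  also have "\<dots> = (\<Sum>z\<in>l. \<Sum>i\<in>l. 1 * matsuo_mult L (basis_vec z) (basis_prod L i p) y)"
    by (simp only: step)
  also have "\<dots> = (\<Sum>i\<in>l. basis_prod L i p y)"
    using IDcore[OF c2, of a b c p y] l unfolding abc by simp
  also have "\<dots> = matsuo_mult L (line_elem l) (basis_vec p) y"
    unfolding e by simp
  finally show ?thesis .
qed

lemma Idem: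
  assumes c2: "(2::'r::comm_ring_1) = 0" and l: "l \<in> L" and fv: "finite {x. v x \<noteq> 0}"
  shows "matsuo_mult L (line_elem l) (matsuo_mult L (line_elem l) v) y = (matsuo_mult L (line_elem l) v y :: 'r)"
proof -
  define T where "T = {x. v x \<noteq> 0}"
  have fT: "finite T" using fv by (simp add: T_def)
  have e: "matsuo_mult L (line_elem l) v = (\<lambda>y. \<Sum>p\<in>T. v p * matsuo_mult L (line_elem l) (basis_vec p) y)"
    by (rule ext) (simp add: mmR_exp[OF fin_le[OF l] fv] T_def)
  have "matsuo_mult L (line_elem l) (matsuo_mult L (line_elem l) v) y
      = (\<Sum>p\<in>T. v p * matsuo_mult L (line_elem l) (matsuo_mult L (line_elem l) (basis_vec p)) y)"
    unfolding e by (rule linR) (simp_all add: fT fin_M fin_le[OF l] fin_e)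
  also have "\<dots> = (\<Sum>p\<in>T. v p * matsuo_mult L (line_elem l) (basis_vec p) y)"
    by (simp add: IDb[OF c2 l])
  also have "\<dots> = matsuo_mult L (line_elem l) v y"
    using e by simp
  finally show ?thesis .
qed

end


lemma M_add:
  assumes fz: "finite {x. z x \<noteq> 0}" and ff: "finite {x. f x \<noteq> 0}" and fg: "finite {x. g x \<noteq> 0}"
  shows "matsuo_mult L z (\<lambda>x. f x + g x) y = matsuo_mult L z f y + (matsuo_mult L z g y :: 'r::comm_ring_1)"
proof -
  define T where "T = {x. f x \<noteq> 0} \<union> {x. g x \<noteq> 0}"
  have fT: "finite T" using ff fg by (simp add: T_def)
  have s1: "{x. f x + g x \<noteq> 0} \<subseteq> T" by (auto simp: T_def)
  have s2: "{x. f x \<noteq> 0} \<subseteq> T" "{x. g x \<noteq> 0} \<subseteq> T" by (auto simp: T_def)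
  show ?thesis
    unfolding mm_repr[OF fz fT order.refl s1] mm_repr[OF fz fT order.refl s2(1)] mm_repr[OF fz fT order.refl s2(2)]
    by (simp add: distrib_left distrib_right sum.distrib)
qed

context fgeo
begin

lemma supp_K: "p \<in> P \<Longrightarrow> q \<in> P \<Longrightarrow> {x. (basis_prod L p q x :: 'r::comm_ring_1) \<noteq> 0} \<subseteq> P"
proof (cases "col p q")
  case True
  assume "p \<in> P" "q \<in> P"
  have "w p q \<in> P" using lsub[OF col_line[OF True]] by auto
  then show ?thesis using \<open>p \<in> P\<close> \<open>q \<in> P\<close> by (auto simp: basis_prod_def basis_vec_def)
next
  case False
  then show ?thesis by (simp add: basis_prod_def)
qed

lemma carrier_M:
  assumes "u \<in> matsuo_carrier P" "v \<in> matsuo_carrier P"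
  shows "(matsuo_mult L u v :: _ \<Rightarrow> 'r::comm_ring_1) \<in> matsuo_carrier P"
proof -
  have fu: "finite {x. u x \<noteq> 0}" and su: "{x. u x \<noteq> 0} \<subseteq> P"
    and fv: "finite {x. v x \<noteq> 0}" and sv: "{x. v x \<noteq> 0} \<subseteq> P"
    using assms by (auto simp: matsuo_carrier_def)
  have "{x. matsuo_mult L u v x \<noteq> 0} \<subseteq> P"
  proof
    fix x assume "x \<in> {x. matsuo_mult L u v x \<noteq> 0}"
    then have "(\<Sum>p\<in>{x. u x \<noteq> 0}. u p * (\<Sum>q\<in>{x. v x \<noteq> 0}. v q * basis_prod L p q x)) \<noteq> 0"
      using mm_as_sum[OF fu fv] by simp
    then obtain p where p: "p \<in> {x. u x \<noteq> 0}" "u p * (\<Sum>q\<in>{x. v x \<noteq> 0}. v q * basis_prod L p q x) \<noteq> 0"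
      by (rule sum.not_neutral_contains_not_neutral)
    then have "(\<Sum>q\<in>{x. v x \<noteq> 0}. v q * basis_prod L p q x) \<noteq> 0" by (cases "(\<Sum>q\<in>{x. v x \<noteq> 0}. v q * basis_prod L p q x) = 0") auto
    then obtain q where q: "q \<in> {x. v x \<noteq> 0}" "v q * basis_prod L p q x \<noteq> 0"
      by (rule sum.not_neutral_contains_not_neutral)
    then have "basis_prod L p q x \<noteq> (0::'r)" by (cases "basis_prod L p q x = (0::'r)") auto
    then show "x \<in> P" using supp_K[of p q] p(1) q(1) su sv by blast
  qed
  then show ?thesis using fin_M[OF fu fv] by (simp add: matsuo_carrier_def)
qed

end


theorem theorem5p24:
  fixes G :: "'g monoid" and D :: "'g set"
  assumes "three_transposition_group G D"
    and "symplectic_type D (fischer_lines G D)"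
    and "(2::'r::comm_ring_1) = 0"
    and "l \<in> fischer_lines G D"
  defines "A \<equiv> (matsuo_carrier D :: ('g \<Rightarrow> 'r) set)"
    and "A0 \<equiv> eigenspace_ad D (fischer_lines G D) l (0::'r)"
    and "A1 \<equiv> eigenspace_ad D (fischer_lines G D) l (1::'r)"
    and "mm \<equiv> matsuo_mult (fischer_lines G D) :: ('g \<Rightarrow> 'r) \<Rightarrow> _"
  shows "(\<forall>v\<in>A. \<exists>v0\<in>A0. \<exists>v1\<in>A1. v = (\<lambda>x. v0 x + v1 x)) \<and> A0 \<inter> A1 = {(\<lambda>x. 0)}
    \<and> (\<forall>a\<in>A0. \<forall>b\<in>A0. mm a b \<in> A0)
    \<and> (\<forall>a\<in>A0. \<forall>b\<in>A1. mm a b \<in> A1)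
    \<and> (\<forall>a\<in>A1. \<forall>b\<in>A1. mm a b \<in> A0)"
proof -
  interpret g: fgeo D "fischer_lines G D"
  proof
    show "\<And>l. l \<in> fischer_lines G D \<Longrightarrow> l \<subseteq> D" by (simp add: fischer_lines_def)
    show "\<And>l. l \<in> fischer_lines G D \<Longrightarrow> card l = 3" by (simp add: fischer_lines_def)
    show "symplectic_type D (fischer_lines G D)" by fact
  qed
  note c2 = assms(3) and l = assms(4)
  note C = g.char2[OF c2]
  let ?L = "fischer_lines G D"
  let ?e = "line_elem l :: 'g \<Rightarrow> 'r"
  have car: "v \<in> A \<longleftrightarrow> finite {x. v x \<noteq> 0} \<and> {x. v x \<noteq> 0} \<subseteq> D" for v
    by (simp add: A_def matsuo_carrier_def)
  have eA: "?e \<in> A" using g.fin_le[OF l] g.lsub[OF l] by (auto simp: car line_elem_def)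
  have MA: "mm u v \<in> A" if "u \<in> A" "v \<in> A" for u v
    using g.carrier_M[of u v] that by (simp add: A_def mm_def)
  have A0i: "v \<in> A0 \<longleftrightarrow> v \<in> A \<and> mm ?e v = (\<lambda>x. 0)" for v
    by (simp add: A0_def A_def mm_def eigenspace_ad_def)
  have A1i: "v \<in> A1 \<longleftrightarrow> v \<in> A \<and> mm ?e v = v" for v
    by (simp add: A1_def A_def mm_def eigenspace_ad_def)
  have fin: "finite {x. v x \<noteq> 0}" if "v \<in> A" for v using that car by blast
  have Dl: "mm ?e (mm u v) = (\<lambda>y. mm (mm ?e u) v y + mm u (mm ?e v) y)" if "u \<in> A" "v \<in> A" for u v
    unfolding mm_def by (rule ext, rule g.Dl[OF c2 l fin[OF that(1)] fin[OF that(2)]])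
  have Id: "mm ?e (mm ?e v) = mm ?e v" if "v \<in> A" for v
    unfolding mm_def by (rule ext, rule g.Idem[OF c2 l fin[OF that]])
  have addA: "(\<lambda>x. u x + v x) \<in> A" if "u \<in> A" "v \<in> A" for u v
  proof -
    have "{x. u x + v x \<noteq> 0} \<subseteq> {x. u x \<noteq> 0} \<union> {x. v x \<noteq> 0}" by auto
    then show ?thesis using that unfolding car by (auto intro: finite_subset)
  qed
  have madd: "mm ?e (\<lambda>x. u x + v x) = (\<lambda>y. mm ?e u y + mm ?e v y)" if "u \<in> A" "v \<in> A" for u v
    unfolding mm_def by (rule ext, rule M_add[OF g.fin_le[OF l] fin[OF that(1)] fin[OF that(2)]])
  have zA: "(\<lambda>x. 0) \<in> A" by (simp add: car)
  have mz: "mm ?e (\<lambda>x. 0) = (\<lambda>x. 0)" by (simp add: mm_def)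
  have P1: "\<forall>v\<in>A. \<exists>v0\<in>A0. \<exists>v1\<in>A1. v = (\<lambda>x. v0 x + v1 x)"
  proof
    fix v assume v: "v \<in> A"
    define v1 where "v1 = mm ?e v"
    define v0 where "v0 = (\<lambda>x. v x + v1 x)"
    have v1A: "v1 \<in> A" unfolding v1_def by (rule MA[OF eA v])
    have v0A: "v0 \<in> A" unfolding v0_def by (rule addA[OF v v1A])
    have "mm ?e v0 = (\<lambda>y. mm ?e v y + mm ?e v1 y)" unfolding v0_def by (rule madd[OF v v1A])
    also have "\<dots> = (\<lambda>x. 0)" unfolding v1_def Id[OF v] by (simp add: C)
    finally have "v0 \<in> A0" using v0A A0i by blast
    moreover have "v1 \<in> A1" using A1i v1A Id[OF v] v1_def by simp
    moreover have "v = (\<lambda>x. v0 x + v1 x)" unfolding v0_def by (simp add: add.assoc C)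
    ultimately show "\<exists>v0\<in>A0. \<exists>v1\<in>A1. v = (\<lambda>x. v0 x + v1 x)" by blast
  qed
  have P2: "A0 \<inter> A1 = {(\<lambda>x. 0)}"
  proof
    show "A0 \<inter> A1 \<subseteq> {\<lambda>x. 0}"
    proof
      fix v assume "v \<in> A0 \<inter> A1"
      then have "mm ?e v = (\<lambda>x. 0)" "mm ?e v = v" using A0i A1i by auto
      then show "v \<in> {\<lambda>x. 0}" by simp
    qed
    show "{\<lambda>x. 0} \<subseteq> A0 \<inter> A1" using zA mz A0i A1i by auto
  qed
  have P3: "\<forall>a\<in>A0. \<forall>b\<in>A0. mm a b \<in> A0"
  proof (intro ballI)
    fix a b assume a: "a \<in> A0" and b: "b \<in> A0"
    then have aA: "a \<in> A" and bA: "b \<in> A" and ea: "mm ?e a = (\<lambda>x. 0)" and eb: "mm ?e b = (\<lambda>x. 0)"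
      using A0i by auto
    have "mm ?e (mm a b) = (\<lambda>x. 0)" unfolding Dl[OF aA bA] ea eb by (simp add: mm_def)
    then show "mm a b \<in> A0" using A0i MA[OF aA bA] by blast
  qed
  have P4: "\<forall>a\<in>A0. \<forall>b\<in>A1. mm a b \<in> A1"
  proof (intro ballI)
    fix a b assume a: "a \<in> A0" and b: "b \<in> A1"
    then have aA: "a \<in> A" and bA: "b \<in> A" and ea: "mm ?e a = (\<lambda>x. 0)" and eb: "mm ?e b = b"
      using A0i A1i by auto
    have "mm ?e (mm a b) = mm a b" unfolding Dl[OF aA bA] ea eb by (simp add: mm_def)
    then show "mm a b \<in> A1" using A1i MA[OF aA bA] by blast
  qed
  have P5: "\<forall>a\<in>A1. \<forall>b\<in>A1. mm a b \<in> A0"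
  proof (intro ballI)
    fix a b assume a: "a \<in> A1" and b: "b \<in> A1"
    then have aA: "a \<in> A" and bA: "b \<in> A" and ea: "mm ?e a = a" and eb: "mm ?e b = b"
      using A1i by auto
    have "mm ?e (mm a b) = (\<lambda>x. 0)" unfolding Dl[OF aA bA] ea eb by (simp add: C)
    then show "mm a b \<in> A0" using A0i MA[OF aA bA] by blast
  qed
  show ?thesis using P1 P2 P3 P4 P5 by blast
qed

end
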